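(* Strong coherence does not satisfy directionality. That is, there exist an SBAF $\mathcal{SB}=\langle\mathcal{L},A,\to,\text{supp}\rangle$, a set $U\subseteq A$ and a set $E\subseteq U$ with the following properties: (i) no argument of $A\setminus U$ attacks an argument of $U$, and no argument $b\in U$ is supported by $A\setminus U$ (i.e. $Prem(b)\not\subseteq Sent(A\setminus U)$ for all $b\in U$); (ii) $E$ is strongly coherent in the restricted SBAF $\mathcal{SB}_{|U}$; (iii) there is no strongly coherent extension $E'\subseteq A$ of $\mathcal{SB}$ with $E=E'\cap U$.
   Context: A language is a triple $\mathcal{L}=\langle L,\overline{\cdot},n\rangle$: $L$ is a nonempty set of sentences; $\overline{\cdot}$ assigns to each $s\in L$ a set $\overline{s}\subseteq L$ of sentences incompatible with $s$, and is symmetric ($s\in\overline{t}\iff t\in\overline{s}$); $n$ is a partial naming function assigning to an argument $a$ a sentence $n(a)\in L$ (if $n(a)$ is undefined, put $\overline{n(a)}:=\emptyset$), and $\overline{n(\langle\{t\},t\rangle)}=\emptyset$ for all $t\in L$. An argument is a pair $a=\langle Prem(a),Conc(a)\rangle$ with $Prem(a)$ a nonempty finite subset of $L$ and $Conc(a)\in L$; $Sent(a):=Prem(a)\cup\{Conc(a)\}$ and $Sent(E):=\bigcup_{a\in E}Sent(a)$. The minimal argument for $s$ is $\langle\{s\},s\rangle$. A set $E$ of arguments supports an argument $a$ if $Prem(a)\subseteq Sent(E)$; $E$ contains undercutting information for $a$ if $\overline{n(a)}\cap Sent(E)\neq\emptyset$. Argument $a$ attacks $b$ ($a\to b$) if $Conc(a)\in\overline{s}$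 for some $s\in Sent(b)$ or $Conc(a)\in\overline{n(b)}$. An SBAF is $\mathcal{SB}=\langle\mathcal{L},A,\to,\text{supp}\rangle$ with $A$ a finite set of arguments in $\mathcal L$ and attack and support as just defined. For $E\subseteq A$: $E\to b$ if some $a\in E$ attacks $b$; $E$ defends $a\in A$ if $E\to b$ for every $b\in A$ with $b\to a$; $E$ is conflict-free if there are no $a,b\in E$ with $a\to b$; $E$ is admissible if it is conflict-free and defends each of its elements. $E\subseteq A$ is strongly coherent if it is admissible and for every $a\in A$: if $E$ supports $a$ and $E$ contains no undercutting information for $a$, then $a\in E$. For $U\subseteq A$, $\mathcal{SB}_{|U}=\langle\mathcal{L},U,\to\cap(U\times U),\text{supp restricted to }U\rangle$ is the SBAF with argument set $U$; all notions (defence, admissibility, coherence) in $\mathcal{SB}_{|U}$ are computed with $U$ in place of $A$. *)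

theory Defs
  imports Main
begin

type_synonym 's argument = "'s set \<times> 's"

definition Prem :: "'s argument \<Rightarrow> 's set" where "Prem a = fst a"
definition Conc :: "'s argument \<Rightarrow> 's" where "Conc a = snd a"
definition Sent :: "'s argument \<Rightarrow> 's set" where "Sent a = Prem a \<union> {Conc a}"
definition SentS :: "'s argument set \<Rightarrow> 's set" where "SentS E = (\<Union>a\<in>E. Sent a)"

definition ncontr :: "('s \<Rightarrow> 's set) \<Rightarrow> ('s argument \<Rightarrow> 's option) \<Rightarrow> 's argument \<Rightarrow> 's set" where
  "ncontr contr nm a = (case nm a of None \<Rightarrow> {} | Some s \<Rightarrow> contr s)"

definition is_language :: "'s set \<Rightarrow> ('s \<Rightarrow> 's set) \<Rightarrow> ('s argument \<Rightarrow> 's option) \<Rightarrow> bool" where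
  "is_language L contr nm \<longleftrightarrow>
     L \<noteq> {} \<and>
     (\<forall>s\<in>L. contr s \<subseteq> L) \<and>
     (\<forall>s\<in>L. \<forall>t\<in>L. s \<in> contr t \<longleftrightarrow> t \<in> contr s) \<and>
     (\<forall>a s. nm a = Some s \<longrightarrow> s \<in> L) \<and>
     (\<forall>t. ncontr contr nm ({t}, t) = {})"

definition is_argument :: "'s set \<Rightarrow> 's argument \<Rightarrow> bool" where
  "is_argument L a \<longleftrightarrow> Prem a \<noteq> {} \<and> finite (Prem a) \<and> Prem a \<subseteq> L \<and> Conc a \<in> L"

text \<open>An SBAF over the language is determined by its finite set of arguments.\<close>
definition is_SBAF :: "'s set \<Rightarrow> ('s \<Rightarrow> 's set) \<Rightarrow> ('s argument \<Rightarrow> 's option) \<Rightarrow> 's argument set \<Rightarrow> bool" where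
  "is_SBAF L contr nm A \<longleftrightarrow> is_language L contr nm \<and> finite A \<and> (\<forall>a\<in>A. is_argument L a)"

definition attacks :: "('s \<Rightarrow> 's set) \<Rightarrow> ('s argument \<Rightarrow> 's option) \<Rightarrow> 's argument \<Rightarrow> 's argument \<Rightarrow> bool" where
  "attacks contr nm a b \<longleftrightarrow> (\<exists>s\<in>Sent b. Conc a \<in> contr s) \<or> Conc a \<in> ncontr contr nm b"

definition supports :: "'s argument set \<Rightarrow> 's argument \<Rightarrow> bool" where
  "supports E a \<longleftrightarrow> Prem a \<subseteq> SentS E"

definition undercut_info :: "('s \<Rightarrow> 's set) \<Rightarrow> ('s argument \<Rightarrow> 's option) \<Rightarrow> 's argument set \<Rightarrow> 's argument \<Rightarrow> bool" where
  "undercut_info contr nm E a \<longleftrightarrow> ncontr contr nm a \<inter> SentS E \<noteq> {}"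

definition set_attacks :: "('s \<Rightarrow> 's set) \<Rightarrow> ('s argument \<Rightarrow> 's option) \<Rightarrow> 's argument set \<Rightarrow> 's argument \<Rightarrow> bool" where
  "set_attacks contr nm E b \<longleftrightarrow> (\<exists>a\<in>E. attacks contr nm a b)"

text \<open>Notions relative to the argument set A of the (possibly restricted) SBAF.\<close>
definition defends :: "('s \<Rightarrow> 's set) \<Rightarrow> ('s argument \<Rightarrow> 's option) \<Rightarrow> 's argument set \<Rightarrow> 's argument set \<Rightarrow> 's argument \<Rightarrow> bool" where
  "defends contr nm A E a \<longleftrightarrow> (\<forall>b\<in>A. attacks contr nm b a \<longrightarrow> set_attacks contr nm E b)"

definition conflict_free :: "('s \<Rightarrow> 's set) \<Rightarrow> ('s argument \<Rightarrow> 's option) \<Rightarrow> 's argument set \<Rightarrow> bool" where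
  "conflict_free contr nm E \<longleftrightarrow> \<not> (\<exists>a\<in>E. \<exists>b\<in>E. attacks contr nm a b)"

definition admissible :: "('s \<Rightarrow> 's set) \<Rightarrow> ('s argument \<Rightarrow> 's option) \<Rightarrow> 's argument set \<Rightarrow> 's argument set \<Rightarrow> bool" where
  "admissible contr nm A E \<longleftrightarrow> E \<subseteq> A \<and> conflict_free contr nm E \<and> (\<forall>a\<in>E. defends contr nm A E a)"

definition strongly_coherent :: "('s \<Rightarrow> 's set) \<Rightarrow> ('s argument \<Rightarrow> 's option) \<Rightarrow> 's argument set \<Rightarrow> 's argument set \<Rightarrow> bool" where
  "strongly_coherent contr nm A E \<longleftrightarrow> admissible contr nm A E \<and>
     (\<forall>a\<in>A. supports E a \<and> \<not> undercut_info contr nm E a \<longrightarrow> a \<in> E)"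

end

theory Submission
  imports Defs
begin

theorem mainTheorem1:
  shows "\<exists>(L :: nat set) contr nm A U E.
    is_SBAF L contr nm A \<and> U \<subseteq> A \<and> E \<subseteq> U \<and>
    (\<forall>a\<in>A - U. \<forall>b\<in>U. \<not> attacks contr nm a b) \<and>
    (\<forall>b\<in>U. \<not> supports (A - U) b) \<and>
    strongly_coherent contr nm U E \<and>
    \<not> (\<exists>E'. E' \<subseteq> A \<and> strongly_coherent contr nm A E' \<and> E = E' \<inter> U)"
proof -
  define L :: "nat set" where "L = {1,2,3,5,6}"
  define contr :: "nat \<Rightarrow> nat set" where
    "contr = (\<lambda>s. if s = 2 then {5} else if s = 5 then {2} else {})"
  define a :: "nat argument" where "a = ({1}, 6)"
  define c :: "nat argument" where "c = ({6}, 3)"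
  define d :: "nat argument" where "d = ({2}, 2)"
  define nm :: "nat argument \<Rightarrow> nat option" where "nm = (\<lambda>x. if x = c then Some 5 else None)"
  define A where "A = {a, c, d}"
  define U where "U = {a, d}"
  define E where "E = {a}"
  have nc: "ncontr contr nm x = (if x = c then {2} else {})" for x
    by (simp add: ncontr_def nm_def contr_def)
  have att2: "attacks contr nm x y \<longleftrightarrow> x = d \<and> y = c" if "x \<in> A" "y \<in> A" for x y
  proof -
    have "x = a \<or> x = c \<or> x = d" "y = a \<or> y = c \<or> y = d" using that by (auto simp: A_def)
    then show ?thesis
      unfolding attacks_def nc by (elim disjE) (simp_all add: a_def c_def d_def Sent_def Prem_def Conc_def contr_def)
  qed
  have lang: "is_language L contr nm"
    by (auto simp: is_language_def L_def contr_def nm_def ncontr_def c_def)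
  have sbaf: "is_SBAF L contr nm A"
    using lang by (auto simp: is_SBAF_def A_def is_argument_def L_def a_def c_def d_def Prem_def Conc_def)
  have dist: "a \<noteq> c" "a \<noteq> d" "c \<noteq> d" by (auto simp: a_def c_def d_def)
  have mem: "a \<in> A" "c \<in> A" "d \<in> A" by (auto simp: A_def)
  have nat: "\<not> attacks contr nm c a" "\<not> attacks contr nm c d" "\<not> attacks contr nm a a"
    "\<not> attacks contr nm d a" "\<not> attacks contr nm a d" "\<not> attacks contr nm a c"
    "\<not> attacks contr nm c c" "\<not> attacks contr nm d d" "attacks contr nm d c"
    using att2[OF mem(1) mem(1)] att2[OF mem(1) mem(2)] att2[OF mem(1) mem(3)]
      att2[OF mem(2) mem(1)] att2[OF mem(2) mem(2)] att2[OF mem(2) mem(3)]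
      att2[OF mem(3) mem(1)] att2[OF mem(3) mem(2)] att2[OF mem(3) mem(3)] dist by auto
  have AU: "A - U = {c}" using dist by (auto simp: A_def U_def)
  have p1: "\<forall>x\<in>A - U. \<forall>b\<in>U. \<not> attacks contr nm x b"
  proof (intro ballI)
    fix x b assume "x \<in> A - U" "b \<in> U"
    then have "x = c" "b = a \<or> b = d" using AU by (blast, simp add: U_def)
    then show "\<not> attacks contr nm x b" using nat by blast
  qed
  have p2: "\<forall>b\<in>U. \<not> supports (A - U) b"
  proof
    fix b assume "b \<in> U"
    then have "b = a \<or> b = d" by (simp add: U_def)
    moreover have "\<not> supports {c} a" "\<not> supports {c} d"
      by (simp_all add: supports_def SentS_def Sent_def Prem_def Conc_def a_def c_def d_def)
    ultimately show "\<not> supports (A - U) b" unfolding AU by blast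
  qed
  have p3: "strongly_coherent contr nm U E"
    unfolding strongly_coherent_def admissible_def conflict_free_def defends_def
    using nat dist
    by (auto simp: U_def E_def supports_def SentS_def Sent_def Prem_def Conc_def a_def d_def)
  have p4: "\<not> (\<exists>E'. E' \<subseteq> A \<and> strongly_coherent contr nm A E' \<and> E = E' \<inter> U)"
  proof
    assume "\<exists>E'. E' \<subseteq> A \<and> strongly_coherent contr nm A E' \<and> E = E' \<inter> U"
    then obtain E' where h: "E' \<subseteq> A" "strongly_coherent contr nm A E'" "E = E' \<inter> U" by blast
    have aE: "a \<in> E'" and dE: "d \<notin> E'" using h(3) dist by (auto simp: E_def U_def)
    have sub: "E' \<subseteq> {a, c}" using h(1) dE by (auto simp: A_def)
    have "6 \<in> Sent a" by (simp add: Sent_def Conc_def a_def)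
    then have "6 \<in> SentS E'" using aE unfolding SentS_def by blast
    then have "supports E' c" by (simp add: supports_def Prem_def c_def)
    moreover have "\<not> undercut_info contr nm E' c"
    proof -
      have "2 \<notin> SentS E'" using sub
        by (auto simp: SentS_def Sent_def Prem_def Conc_def a_def c_def)
      then show ?thesis by (simp add: undercut_info_def nc)
    qed
    ultimately have cE: "c \<in> E'" using h(2) by (auto simp: strongly_coherent_def A_def)
    have "defends contr nm A E' c" using h(2) cE by (auto simp: strongly_coherent_def admissible_def)
    then have "set_attacks contr nm E' d"
      using nat mem by (auto simp: defends_def)
    then obtain x where "x \<in> E'" "attacks contr nm x d" by (auto simp: set_attacks_def)
    then show False using nat sub by auto
  qed
  show ?thesis
    apply (rule exI[of _ L], rule exI[of _ contr], rule exI[of _ nm], rule exI[of _ A],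
           rule exI[of _ U], rule exI[of _ E])
    using sbaf p1 p2 p3 p4 by (auto simp: U_def A_def E_def)
qed

end
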